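(* For $i=1,2$ let $\alpha_i\in[-1,1]$ and let $f_{\alpha_i}=h_i+\overline{g_i}\in S_H$ with $h_i(z)+g_i(z)=\dfrac{z(1-\alpha_i z)}{1-z^2}$, with dilatations $\omega_i=g_i'/h_i'$. If $\Re\big((1-\omega_1(z)\overline{\omega_2(z)})\,h_1'(z)\overline{h_2'(z)}\big)>0$ for all $z\in E$, then for every $0\le t\le1$ the map $f=tf_{\alpha_1}+(1-t)f_{\alpha_2}$ belongs to $S_H$ and maps $E$ onto a domain convex in the direction of the imaginary axis.
   Context: $E=\{z\in\mathbb{C}:|z|<1\}$. For a harmonic mapping $f=h+\overline{g}$ on $E$ with $h,g$ analytic, the dilatation is $\omega=g'/h'$. $S_H$ denotes the class of harmonic, univalent, sense-preserving mappings $f=h+\overline{g}$ of $E$ ($h'\ne0$, $|\omega|<1$) normalized by $f(0)=0$, $f_z(0)=1$. A domain $\Omega$ is convex in the direction of the imaginary axis if every line parallel to the imaginary axis has connected or empty intersection with $\Omega$. *)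

theory Defs
  imports "HOL-Analysis.Analysis"
begin

definition unit_disc :: "complex set" where
  "unit_disc = ball 0 1"

definition dilatation :: "(complex \<Rightarrow> complex) \<Rightarrow> (complex \<Rightarrow> complex) \<Rightarrow> complex \<Rightarrow> complex" where
  "dilatation h g z = deriv g z / deriv h z"

definition in_SH :: "(complex \<Rightarrow> complex) \<Rightarrow> (complex \<Rightarrow> complex) \<Rightarrow> bool" where
  "in_SH h g \<longleftrightarrow>
     h holomorphic_on unit_disc \<and> g holomorphic_on unit_disc \<and>
     inj_on (\<lambda>z. h z + cnj (g z)) unit_disc \<and>
     (\<forall>z\<in>unit_disc. deriv h z \<noteq> 0 \<and> cmod (dilatation h g z) < 1) \<and>
     h 0 + cnj (g 0) = 0 \<and> deriv h 0 = 1"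

definition convex_dir_imag :: "complex set \<Rightarrow> bool" where
  "convex_dir_imag \<Omega> \<longleftrightarrow> (\<forall>x::real. connected (\<Omega> \<inter> {z. Re z = x}))"

end

theory Submission
  imports Defs
begin


lemma vd_Im:
  assumes "(f has_vector_derivative f') (at t)"
  shows "((\<lambda>t. Im (f t)) has_real_derivative Im f') (at t)"
proof -
  have "((\<lambda>t. Im (f t)) has_derivative (\<lambda>h. Im (h *\<^sub>R f'))) (at t)"
    using assms unfolding has_vector_derivative_def by (rule has_derivative_Im)
  moreover have "(\<lambda>h. Im (h *\<^sub>R f')) = (*) (Im f')" by (auto simp: mult.commute)
  ultimately show ?thesis by (simp add: has_field_derivative_def mult.commute)
qed

lemma open_unit_disc: "open unit_disc" by (simp add: unit_disc_def)

lemma shear_core: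
  fixes h g :: "complex \<Rightarrow> complex" and \<Gamma> \<Gamma>' :: "real \<Rightarrow> complex" and M M' :: "real \<Rightarrow> real"
  assumes hol: "h holomorphic_on unit_disc" "g holomorphic_on unit_disc"
    and dil: "\<And>z. z \<in> unit_disc \<Longrightarrow> cmod (deriv g z) < cmod (deriv h z)"
    and Gin: "\<And>t. \<Gamma> t \<in> unit_disc"
    and Gd: "\<And>t. (\<Gamma> has_vector_derivative \<Gamma>' t) (at t)"
    and eq: "\<And>t. h (\<Gamma> t) + g (\<Gamma> t) = c + \<i> * of_real (M t)"
    and Md: "\<And>t. (M has_real_derivative M' t) (at t)"
    and Mpos: "\<And>t. M' t > 0"
  shows "strict_mono (\<lambda>t. Im (h (\<Gamma> t)) - Im (g (\<Gamma> t)))"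
proof -
  have der: "((\<lambda>t. Im (h (\<Gamma> t)) - Im (g (\<Gamma> t))) has_real_derivative
       (Im (\<Gamma>' t * deriv h (\<Gamma> t)) - Im (\<Gamma>' t * deriv g (\<Gamma> t)))) (at t)
     \<and> Im (\<Gamma>' t * deriv h (\<Gamma> t)) - Im (\<Gamma>' t * deriv g (\<Gamma> t)) > 0" for t
  proof -
    have hd: "(h has_field_derivative deriv h (\<Gamma> t)) (at (\<Gamma> t))"
      using holomorphic_derivI[OF hol(1) open_unit_disc Gin] by blast
    have gd: "(g has_field_derivative deriv g (\<Gamma> t)) (at (\<Gamma> t))"
      using holomorphic_derivI[OF hol(2) open_unit_disc Gin] by blast
    have ch: "((h \<circ> \<Gamma>) has_vector_derivative \<Gamma>' t * deriv h (\<Gamma> t)) (at t)"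
      by (rule field_vector_diff_chain_at[OF Gd hd])
    have cg: "((g \<circ> \<Gamma>) has_vector_derivative \<Gamma>' t * deriv g (\<Gamma> t)) (at t)"
      by (rule field_vector_diff_chain_at[OF Gd gd])
    have s1: "((\<lambda>t. h (\<Gamma> t) + g (\<Gamma> t)) has_vector_derivative
              \<Gamma>' t * deriv h (\<Gamma> t) + \<Gamma>' t * deriv g (\<Gamma> t)) (at t)"
      using has_vector_derivative_add[OF ch cg] by (simp add: o_def)
    have s2: "((\<lambda>t. h (\<Gamma> t) + g (\<Gamma> t)) has_vector_derivative \<i> * of_real (M' t)) (at t)"
    proof -
      have "((\<lambda>t. c + \<i> * of_real (M t)) has_vector_derivative 0 + \<i> * of_real (M' t)) (at t)"
        by (intro has_vector_derivative_add has_vector_derivative_const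
            has_vector_derivative_mult_right has_vector_derivative_of_real Md)
      then show ?thesis by (simp add: eq)
    qed
    define u where "u = \<Gamma>' t * deriv h (\<Gamma> t)"
    define v where "v = \<Gamma>' t * deriv g (\<Gamma> t)"
    have uv: "u + v = \<i> * of_real (M' t)"
      using vector_derivative_unique_at[OF s1 s2] by (simp add: u_def v_def)
    have "cmod v \<le> cmod u"
      using dil[OF Gin[of t]] by (simp add: u_def v_def norm_mult mult_left_mono)
    have nz: "\<Gamma>' t \<noteq> 0" using uv Mpos[of t] by (auto simp: u_def v_def)
    have "cmod v < cmod u"
      using dil[OF Gin[of t]] nz by (simp add: u_def v_def norm_mult)
    then have "(cmod v)^2 < (cmod u)^2" by (simp add: power_strict_mono)
    then have ineq: "Re v ^2 + Im v ^2 < Re u ^2 + Im u ^2" by (simp add: cmod_power2)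
    have r: "Re u = - Re v" "Im u = M' t - Im v" using arg_cong[OF uv, of Re] arg_cong[OF uv, of Im] by auto
    have pos: "Im u - Im v > 0"
    proof -
      from ineq r have "Im v ^2 < (M' t - Im v)^2" by simp
      then have "0 < M' t * (M' t - 2 * Im v)" by (simp add: power2_eq_square algebra_simps)
      then have "M' t - 2 * Im v > 0" using Mpos[of t] by (simp add: zero_less_mult_iff)
      then show ?thesis using r by simp
    qed
    have "((\<lambda>t. Im (h (\<Gamma> t)) - Im (g (\<Gamma> t))) has_real_derivative Im u - Im v) (at t)"
      using DERIV_diff[OF vd_Im[OF ch] vd_Im[OF cg]] by (simp add: u_def v_def o_def)
    then show ?thesis using pos by (simp add: u_def v_def)
  qed
  show ?thesis
  proof (rule strict_monoI)
    fix a b :: real assume "a < b"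
    then show "Im (h (\<Gamma> a)) - Im (g (\<Gamma> a)) < Im (h (\<Gamma> b)) - Im (g (\<Gamma> b))"
      using DERIV_pos_imp_increasing[of a b] der by blast
  qed
qed



definition phi :: "real \<Rightarrow> complex \<Rightarrow> complex" where
  "phi a z = z * (1 - of_real a * z) / (1 - z\<^sup>2)"

lemma disc_zeta: "Re \<zeta> > 0 \<Longrightarrow> (\<zeta> - 1) / (\<zeta> + 1) \<in> unit_disc"
proof -
  assume h: "Re \<zeta> > 0"
  have nz: "\<zeta> + 1 \<noteq> 0" using h by (auto simp: complex_eq_iff)
  have e1: "cmod (\<zeta> - 1)^2 = (Re \<zeta> - 1)^2 + Im \<zeta> ^2" by (simp add: cmod_power2)
  have e2: "cmod (\<zeta> + 1)^2 = (Re \<zeta> + 1)^2 + Im \<zeta> ^2" by (simp add: cmod_power2)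
  have "cmod (\<zeta> - 1)^2 < cmod (\<zeta> + 1)^2" using h unfolding e1 e2 by (simp add: power2_eq_square algebra_simps)
  then have "cmod (\<zeta> - 1) < cmod (\<zeta> + 1)" by (meson norm_ge_zero power_less_imp_less_base)
  then show ?thesis using nz by (simp add: unit_disc_def norm_divide divide_less_eq)
qed

lemma zeta_of_disc:
  assumes "z \<in> unit_disc"
  shows "Re ((1 + z) / (1 - z)) > 0" "z = ((1 + z) / (1 - z) - 1) / ((1 + z) / (1 - z) + 1)"
proof -
  have n: "cmod z < 1" using assms by (simp add: unit_disc_def)
  have nz: "1 - z \<noteq> 0" using n by auto
  have "Re ((1 + z) / (1 - z)) = (1 - (Re z ^2 + Im z ^2)) / ((1 - Re z)^2 + Im z ^2)"
    by (simp add: Re_divide power2_eq_square algebra_simps)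
  moreover have "Re z ^2 + Im z ^2 < 1" using n
    by (metis cmod_power2 abs_square_less_1 abs_norm_cancel)
  moreover have "(1 - Re z)^2 + Im z ^2 > 0"
  proof -
    have "cmod (1 - z)^2 = (1 - Re z)^2 + Im z ^2" by (simp add: cmod_power2)
    moreover have "cmod (1 - z)^2 > 0" using nz by simp
    ultimately show ?thesis by simp
  qed
  ultimately show "Re ((1 + z) / (1 - z)) > 0" by simp
  show "z = ((1 + z) / (1 - z) - 1) / ((1 + z) / (1 - z) + 1)"
    using nz by (simp add: field_simps)
qed

lemma phi_zeta:
  assumes "Re \<zeta> > 0"
  shows "phi a ((\<zeta> - 1) / (\<zeta> + 1)) =
    of_real ((1 - a)/4) * \<zeta> - of_real ((1 + a)/4) / \<zeta> + of_real (a/2)"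
proof -
  have nz: "\<zeta> + 1 \<noteq> 0" "\<zeta> \<noteq> 0" using assms by (auto simp: complex_eq_iff)
  have d0: "1 - ((\<zeta> - 1) / (\<zeta> + 1))\<^sup>2 = ((\<zeta> + 1)^2 - (\<zeta> - 1)^2) / (\<zeta> + 1)^2"
  proof -
    have "(\<zeta> + 1)^2 \<noteq> 0" using nz by simp
    then have "1 - ((\<zeta> - 1) / (\<zeta> + 1))\<^sup>2 = (\<zeta> + 1)^2 / (\<zeta> + 1)^2 - (\<zeta> - 1)^2 / (\<zeta> + 1)^2"
      by (simp add: power_divide)
    then show ?thesis by (simp add: diff_divide_distrib)
  qed
  have d1: "(\<zeta> + 1)^2 - (\<zeta> - 1)^2 = 4 * \<zeta>" by (simp add: power2_eq_square algebra_simps)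
  have d: "1 - ((\<zeta> - 1) / (\<zeta> + 1))\<^sup>2 = 4 * \<zeta> / (\<zeta> + 1)^2"
    using d0 d1 by simp
  define w where "w = (\<zeta> - 1) / (\<zeta> + 1)"
  have e1: "1 - of_real a * w = (\<zeta> + 1 - of_real a * (\<zeta> - 1)) / (\<zeta> + 1)"
    using nz by (simp add: w_def field_simps)
  have "phi a w = w * (1 - of_real a * w) / (4 * \<zeta> / (\<zeta> + 1)^2)"
    unfolding phi_def using d by (simp add: w_def)
  also have "\<dots> = ((\<zeta> - 1) * (\<zeta> + 1 - of_real a * (\<zeta> - 1)) / (\<zeta> + 1)^2) / (4 * \<zeta> / (\<zeta> + 1)^2)"
    by (subst e1) (simp add: w_def power2_eq_square)
  also have "\<dots> = (\<zeta> - 1) * (\<zeta> + 1 - of_real a * (\<zeta> - 1)) / (4 * \<zeta>)"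
    using nz by (simp add: divide_divide_eq_left divide_divide_eq_right)
  also have "\<dots> = of_real ((1 - a)/4) * \<zeta> - of_real ((1 + a)/4) / \<zeta> + of_real (a/2)"
    using nz by (simp add: field_simps)
  finally show ?thesis by (simp add: w_def)
qed

lemma zeta_parts:
  fixes x t A B :: real
  assumes "x > 0"
  shows "of_real A * (of_real x * (1 + \<i> * of_real t)) - of_real B / (of_real x * (1 + \<i> * of_real t))
     = Complex (A * x - B / (x * (1 + t^2))) (t * (A * x + B / (x * (1 + t^2))))"
proof -
  have nz: "(1 + \<i> * of_real t) \<noteq> 0" by (auto simp: complex_eq_iff)
  have p: "x * (1 + t^2) > 0" using assms by (simp add: add_pos_nonneg)
  define D where "D = x * (1 + t^2)"
  have "D > 0" using p by (simp only: D_def)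
  then have Dp: "D \<noteq> 0" by simp
  have r0: "x * (1 / D) - (x * t) * (- t / D) = (x * (1 + t^2)) / D"
    using Dp by (simp add: field_simps power2_eq_square)
  have r1: "x * (1 / D) - (x * t) * (- t / D) = D / D"
    using r0 by (simp add: D_def)
  have r2: "x * (- t / D) + (x * t) * (1 / D) = 0"
    using Dp by (simp add: field_simps)
  have m: "(of_real x * (1 + \<i> * of_real t)) * Complex (1 / D) (- t / D) = 1"
    using r1 r2 Dp by (simp add: complex_eq_iff)
  have inv: "1 / (of_real x * (1 + \<i> * of_real t)) = Complex (1 / (x * (1 + t^2))) (- t / (x * (1 + t^2)))"
    using m unfolding D_def by (metis divide_eq_eq mult.commute mult_zero_right zero_neq_one)
  have "of_real B / (of_real x * (1 + \<i> * of_real t)) = of_real B * (1 / (of_real x * (1 + \<i> * of_real t)))"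
    by simp
  also have "\<dots> = Complex (B / (x * (1 + t^2))) (- B * t / (x * (1 + t^2)))"
    unfolding inv by (simp add: complex_eq_iff)
  finally show ?thesis by (simp add: complex_eq_iff algebra_simps)
qed



lemma phi_param:
  fixes x t a :: real
  assumes "x > 0"
  shows "phi a ((of_real x * (1 + \<i> * of_real t) - 1) / (of_real x * (1 + \<i> * of_real t) + 1))
     = Complex ((1-a)/4 * x - (1+a)/4 / (x * (1 + t^2)) + a/2) (t * ((1-a)/4 * x + (1+a)/4 / (x * (1 + t^2))))"
proof -
  have "Re (of_real x * (1 + \<i> * of_real t)) > 0" using assms by simp
  from phi_zeta[OF this, of a] zeta_parts[OF assms, of "(1-a)/4" t "(1+a)/4"]
  show ?thesis by (simp add: complex_eq_iff)
qed

lemma level_generic: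
  fixes a c :: real and x x' :: "real \<Rightarrow> real"
  assumes a: "-1 \<le> a" "a \<le> 1"
    and xpos: "\<And>t. x t > 0"
    and xeq: "\<And>t. (1-a)/4 * (x t)^2 - (c - a/2) * x t - (1+a)/4 / (1 + t^2) = 0"
    and xd: "\<And>t. (x has_real_derivative x' t) (at t)"
  defines "\<Gamma> \<equiv> \<lambda>t. (of_real (x t) * (1 + \<i> * of_real t) - 1) / (of_real (x t) * (1 + \<i> * of_real t) + 1)"
  shows "\<And>t. \<Gamma> t \<in> unit_disc" and "\<And>t. \<exists>G'. (\<Gamma> has_vector_derivative G') (at t)"
    and "\<And>t. phi a (\<Gamma> t) = of_real c + \<i> * of_real (t * (2 * ((1-a)/4) * x t - (c - a/2)))"
    and "\<And>z. z \<in> unit_disc \<Longrightarrow> Re (phi a z) = c \<Longrightarrow> z \<in> range \<Gamma>"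
proof -
  define A where "A = (1-a)/4"
  define B where "B = (1+a)/4"
  define c' where "c' = c - a/2"
  have A0: "A \<ge> 0" and B0: "B \<ge> 0" using a by (auto simp: A_def B_def)
  have AB: "A + B = 1/2" unfolding A_def B_def by argo
  fix t
  show "\<Gamma> t \<in> unit_disc" unfolding \<Gamma>_def by (rule disc_zeta) (simp add: xpos less_imp_le)
  show "\<exists>G'. (\<Gamma> has_vector_derivative G') (at t)"
  proof -
    define \<zeta> where "\<zeta> = (\<lambda>t. of_real (x t) * (1 + \<i> * of_real t) :: complex)"
    have ofr: "((\<lambda>s. complex_of_real s) has_vector_derivative 1) (at t)"
      using has_vector_derivative_of_real[OF DERIV_ident[of "at t"]] by simp
    have idd: "((\<lambda>s. 1 + \<i> * complex_of_real s) has_vector_derivative 0 + \<i> * 1) (at t)"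
      by (intro has_vector_derivative_add has_vector_derivative_const has_vector_derivative_mult_right ofr)
    have zd: "(\<zeta> has_vector_derivative (of_real (x t) * (0 + \<i> * 1) + of_real (x' t) * (1 + \<i> * of_real t))) (at t)"
      unfolding \<zeta>_def
      by (intro has_vector_derivative_mult has_vector_derivative_of_real xd idd)
    have znz: "\<zeta> t + 1 \<noteq> 0" using xpos[of t] by (auto simp: \<zeta>_def complex_eq_iff)
    have md: "((\<lambda>w. (w - 1) / (w + 1)) has_field_derivative ((1 * (\<zeta> t + 1) - (\<zeta> t - 1) * 1) / ((\<zeta> t + 1) * (\<zeta> t + 1)))) (at (\<zeta> t))"
      using znz by (auto intro!: derivative_eq_intros)
    from field_vector_diff_chain_at[OF zd md]
    show ?thesis unfolding \<Gamma>_def \<zeta>_def o_def by blast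
  qed
  have xt: "A * x t - B / (x t * (1 + t^2)) = c'"
  proof -
    have "A * (x t)^2 - c' * x t - B / (1 + t^2) = 0" using xeq[of t] by (simp add: A_def B_def c'_def)
    then have e: "B / (1 + t^2) = A * (x t)^2 - c' * x t" by simp
    have "B / (x t * (1 + t^2)) = (B / (1 + t^2)) / x t" by (simp add: mult.commute)
    also have "\<dots> = A * x t - c'" unfolding e using xpos[of t] by (simp add: power2_eq_square field_simps)
    finally show ?thesis by simp
  qed
  show "phi a (\<Gamma> t) = of_real c + \<i> * of_real (t * (2 * ((1-a)/4) * x t - (c - a/2)))"
  proof -
    have P: "phi a (\<Gamma> t) = Complex (A * x t - B / (x t * (1 + t^2)) + a/2) (t * (A * x t + B / (x t * (1 + t^2))))"
      unfolding \<Gamma>_def A_def B_def by (rule phi_param[OF xpos])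
    have Q: "B / (x t * (1 + t^2)) = A * x t - c'" using xt by simp
    have R: "(1 - a) / 4 = A" by (simp add: A_def)
    show ?thesis unfolding P Q R by (simp add: complex_eq_iff c'_def algebra_simps)
  qed
  show "z \<in> range \<Gamma>" if z: "z \<in> unit_disc" and rz: "Re (phi a z) = c" for z
  proof -
  define \<zeta> where "\<zeta> = (1 + z) / (1 - z)"
  have zp: "Re \<zeta> > 0" and zz: "z = (\<zeta> - 1) / (\<zeta> + 1)" using zeta_of_disc[OF z] by (auto simp: \<zeta>_def)
  define x0 where "x0 = Re \<zeta>"
  define t0 where "t0 = Im \<zeta> / x0"
  have x0p: "x0 > 0" using zp by (simp add: x0_def)
  have ze: "\<zeta> = of_real x0 * (1 + \<i> * of_real t0)" using x0p by (simp add: complex_eq_iff x0_def t0_def)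
  have "Re (phi a z) = A * x0 - B / (x0 * (1 + t0^2)) + a/2"
    unfolding zz ze phi_param[OF x0p] by (simp add: A_def B_def)
  then have e0: "A * x0 - B / (x0 * (1 + t0^2)) = c'" using rz by (simp add: c'_def)
  define y where "y = x t0"
  have yp: "y > 0" using xpos by (simp add: y_def)
  have ey: "A * y - B / (y * (1 + t0^2)) = c'"
  proof -
    have "A * y^2 - c' * y - B / (1 + t0^2) = 0" using xeq[of t0] by (simp add: A_def B_def c'_def y_def)
    then have e: "B / (1 + t0^2) = A * y^2 - c' * y" by simp
    have "B / (y * (1 + t0^2)) = (B / (1 + t0^2)) / y" by (simp add: mult.commute)
    also have "\<dots> = A * y - c'" unfolding e using yp by (simp add: power2_eq_square field_simps)
    finally show ?thesis by simp
  qed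
  have "x0 = y"
  proof (rule ccontr)
    assume ne: "x0 \<noteq> y"
    have q: "B / (x0 * (1 + t0^2)) \<ge> 0" "B / (y * (1 + t0^2)) \<ge> 0"
      using B0 x0p yp by (auto intro!: divide_nonneg_pos add_pos_nonneg)
    have "A * x0 - B / (x0 * (1 + t0^2)) = A * y - B / (y * (1 + t0^2))" using e0 ey by simp
    show False
    proof (cases "B = 0")
      case True
      then have "A * x0 = A * y" using e0 ey by simp
      then show False using ne AB True by simp
    next
      case False
      then have Bp: "B > 0" using B0 by simp
      have tp: "1 + t0^2 > 0" by (simp add: add_pos_nonneg)
      have "x0 < y \<or> y < x0" using ne by linarith
      then show False
      proof
        assume l: "x0 < y"
        have "B / (y * (1 + t0^2)) < B / (x0 * (1 + t0^2))"
          using l x0p yp Bp tp by (intro divide_strict_left_mono mult_strict_right_mono) (auto intro!: mult_pos_pos)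
        moreover have "A * x0 \<le> A * y" using A0 l by (simp add: mult_left_mono)
        ultimately show False using e0 ey by linarith
      next
        assume l: "y < x0"
        have "B / (x0 * (1 + t0^2)) < B / (y * (1 + t0^2))"
          using l x0p yp Bp tp by (intro divide_strict_left_mono mult_strict_right_mono) (auto intro!: mult_pos_pos)
        moreover have "A * y \<le> A * x0" using A0 l by (simp add: mult_left_mono)
        ultimately show False using e0 ey by linarith
      qed
    qed
  qed
  then have "z = \<Gamma> t0" unfolding zz ze \<Gamma>_def y_def by simp
  then show "z \<in> range \<Gamma>" by simp
  qed
qed



lemma phi_Re_disc:
  assumes z: "z \<in> unit_disc"
  shows "\<exists>x0 t0. x0 > 0 \<and> Re (phi a z) = (1-a)/4 * x0 - (1+a)/4 / (x0 * (1 + t0^2)) + a/2"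
proof -
  define \<zeta> where "\<zeta> = (1 + z) / (1 - z)"
  have zp: "Re \<zeta> > 0" and zz: "z = (\<zeta> - 1) / (\<zeta> + 1)" using zeta_of_disc[OF z] by (auto simp: \<zeta>_def)
  define x0 where "x0 = Re \<zeta>"
  define t0 where "t0 = Im \<zeta> / x0"
  have x0p: "x0 > 0" using zp by (simp add: x0_def)
  have ze: "\<zeta> = of_real x0 * (1 + \<i> * of_real t0)" using x0p by (simp add: complex_eq_iff x0_def t0_def)
  have "Re (phi a z) = (1-a)/4 * x0 - (1+a)/4 / (x0 * (1 + t0^2)) + a/2"
    unfolding zz ze phi_param[OF x0p] by simp
  then show ?thesis using x0p by blast
qed

definition level_ok :: "real \<Rightarrow> real \<Rightarrow> (real \<Rightarrow> complex) \<Rightarrow> (real \<Rightarrow> real) \<Rightarrow> (real \<Rightarrow> real) \<Rightarrow> bool" where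
  "level_ok a c \<Gamma> M M' \<longleftrightarrow> (\<forall>t. \<Gamma> t \<in> unit_disc) \<and> (\<forall>t. \<exists>G'. (\<Gamma> has_vector_derivative G') (at t))
     \<and> (\<forall>t. phi a (\<Gamma> t) = of_real c + \<i> * of_real (M t))
     \<and> (\<forall>t. (M has_real_derivative M' t) (at t)) \<and> (\<forall>t. M' t > 0)
     \<and> (\<forall>z. z \<in> unit_disc \<and> Re (phi a z) = c \<longrightarrow> z \<in> range \<Gamma>)"

lemma level_from_x:
  fixes a c :: real and x x' M' :: "real \<Rightarrow> real"
  assumes a: "-1 \<le> a" "a \<le> 1"
    and xpos: "\<And>t. x t > 0"
    and xeq: "\<And>t. (1-a)/4 * (x t)^2 - (c - a/2) * x t - (1+a)/4 / (1 + t^2) = 0"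
    and xd0: "\<And>t. \<exists>D. (x has_real_derivative D) (at t)"
    and Md: "\<And>t. ((\<lambda>t. t * (2 * ((1-a)/4) * x t - (c - a/2))) has_real_derivative M' t) (at t)"
    and Mp: "\<And>t. M' t > 0"
  shows "\<exists>\<Gamma> M M'. level_ok a c \<Gamma> M M'"
proof -
  define x' where "x' = (\<lambda>t. SOME D. (x has_real_derivative D) (at t))"
  have xd: "\<And>t. (x has_real_derivative x' t) (at t)"
    unfolding x'_def using xd0 by (rule someI_ex)
  note L = level_generic[OF a xpos xeq xd]
  show ?thesis unfolding level_ok_def
    by (rule exI[where x="\<lambda>t. (of_real (x t) * (1 + \<i> * of_real t) - 1) / (of_real (x t) * (1 + \<i> * of_real t) + 1)"],
        rule exI[where x="\<lambda>t. t * (2 * ((1-a)/4) * x t - (c - a/2))"], rule exI[where x=M'])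
       (use L Md Mp in blast)
qed

lemma level_exists:
  assumes a: "-1 \<le> a" "a \<le> 1" and z0: "z0 \<in> unit_disc" and c: "Re (phi a z0) = c"
  shows "\<exists>\<Gamma> M M'. level_ok a c \<Gamma> M M'"
proof -
  define A where "A = (1-a)/4"
  define B where "B = (1+a)/4"
  define c' where "c' = c - a/2"
  obtain x0 t0 where x0p: "x0 > 0" and e0: "c = A * x0 - B / (x0 * (1 + t0^2)) + a/2"
    using phi_Re_disc[OF z0, of a] c by (auto simp: A_def B_def)
  have e0': "c' = A * x0 - B / (x0 * (1 + t0^2))" using e0 by (simp add: c'_def)
  have tp: "\<And>t::real. 1 + t^2 > 0" by (simp add: add_pos_nonneg)
  consider "a = 1" | "a = -1" | "-1 < a \<and> a < 1" using a by linarith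
  then show ?thesis
  proof cases
    case 1
    then have A0: "A = 0" and B2: "B = 1/2" by (auto simp: A_def B_def)
    have cn: "c' < 0" using e0' A0 B2 x0p tp[of t0] by (simp add: divide_pos_pos)
    define x where "x = (\<lambda>t::real. - (B / (1 + t^2)) / c')"
    have xpos: "\<And>t. x t > 0" unfolding x_def using cn B2 tp
      by (intro divide_neg_neg) (auto intro!: divide_pos_pos)
    have xeq: "\<And>t. (1-a)/4 * (x t)^2 - (c - a/2) * x t - (1+a)/4 / (1 + t^2) = 0"
      using cn tp unfolding A_def[symmetric] B_def[symmetric] c'_def[symmetric] A0 x_def
      by simp
    have xd: "\<And>t. \<exists>D. (x has_real_derivative D) (at t)"
      unfolding x_def using tp cn
      by (auto intro!: exI derivative_eq_intros simp: less_imp_neq[symmetric])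
    have Md: "\<And>t. ((\<lambda>t. t * (2 * ((1-a)/4) * x t - (c - a/2))) has_real_derivative - c') (at t)"
      unfolding A_def[symmetric] c'_def[symmetric] A0 by (auto intro!: derivative_eq_intros)
    show ?thesis by (rule level_from_x[OF a xpos xeq xd Md]) (use cn in simp)
  next
    case 2
    then have A2: "A = 1/2" and B0: "B = 0" by (auto simp: A_def B_def)
    have cp: "c' > 0" using e0' A2 B0 x0p by simp
    define x where "x = (\<lambda>t::real. 2 * c')"
    have xpos: "\<And>t. x t > 0" using cp by (simp add: x_def)
    have xeq: "\<And>t. (1-a)/4 * (x t)^2 - (c - a/2) * x t - (1+a)/4 / (1 + t^2) = 0"
      unfolding A_def[symmetric] B_def[symmetric] c'_def[symmetric] A2 B0 x_def
      by (simp add: power2_eq_square)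
    have xd: "\<And>t. \<exists>D. (x has_real_derivative D) (at t)"
      unfolding x_def by (auto intro!: derivative_eq_intros)
    have Md: "\<And>t. ((\<lambda>t. t * (2 * ((1-a)/4) * x t - (c - a/2))) has_real_derivative c') (at t)"
      unfolding A_def[symmetric] c'_def[symmetric] A2 x_def by (auto intro!: derivative_eq_intros)
    show ?thesis by (rule level_from_x[OF a xpos xeq xd Md]) (use cp in simp)
  next
    case 3
    then have Ap: "A > 0" and Bp: "B > 0" by (auto simp: A_def B_def)
    define K where "K = 4 * A * B"
    have Kp: "K > 0" using Ap Bp by (simp add: K_def)
    define q where "q = (\<lambda>t::real. c'^2 + K / (1 + t^2))"
    have qp: "\<And>t. q t > c'^2" using Kp tp by (simp add: q_def divide_pos_pos)
    have qpos: "\<And>t. q t > 0" using qp by (metis le_less_trans zero_le_power2)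
    have sq: "\<And>t. sqrt (q t) > c'" "\<And>t. sqrt (q t) > - c'"
    proof -
      fix t
      have "sqrt (c'^2) < sqrt (q t)" using qp[of t] by (simp only: real_sqrt_less_iff)
      then show "sqrt (q t) > c'" "sqrt (q t) > - c'" by auto
    qed
    define x where "x = (\<lambda>t. (c' + sqrt (q t)) / (2 * A))"
    have xpos: "\<And>t. x t > 0" unfolding x_def using sq(2) Ap
      by (intro divide_pos_pos) (smt (verit), simp)
    have xeq: "\<And>t. (1-a)/4 * (x t)^2 - (c - a/2) * x t - (1+a)/4 / (1 + t^2) = 0"
    proof -
      fix t
      have s2: "(sqrt (q t))^2 = c'^2 + K / (1 + t^2)" using qpos[of t] by (simp add: q_def)
      have "A * (x t)^2 - c' * x t = ((sqrt (q t))^2 - c'^2) / (4 * A)"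
        using Ap by (simp add: x_def field_simps power2_eq_square)
      also have "\<dots> = ((4 * A) * (B / (1 + t^2))) / (4 * A)" unfolding s2 by (simp add: K_def)
      also have "\<dots> = B / (1 + t^2)" using Ap by simp
      finally show "?thesis t" by (simp add: A_def[symmetric] B_def[symmetric] c'_def[symmetric])
    qed
    define qd where "qd = (\<lambda>t::real. - K * (2 * t) / (1 + t^2)^2)"
    have qd: "\<And>t. (q has_real_derivative qd t) (at t)"
      unfolding q_def qd_def using tp
      by (auto intro!: derivative_eq_intros simp: less_imp_neq[OF tp, symmetric])
        (simp add: power2_eq_square field_simps less_imp_neq[OF tp, symmetric])
    have sd: "\<And>t. ((\<lambda>t. sqrt (q t)) has_real_derivative (inverse (sqrt (q t)) / 2 * qd t)) (at t)"
      using DERIV_chain2[OF DERIV_real_sqrt[OF qpos] qd] by simp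
    have xd: "\<And>t. \<exists>D. (x has_real_derivative D) (at t)"
      unfolding x_def using DERIV_cdivide[OF DERIV_add[OF DERIV_const sd]] by blast
    have Meq: "(\<lambda>t. t * (2 * ((1-a)/4) * x t - (c - a/2))) = (\<lambda>t. t * sqrt (q t))"
      using Ap by (auto simp: A_def[symmetric] c'_def[symmetric] x_def)
    define M' where "M' = (\<lambda>t. 1 * sqrt (q t) + t * (inverse (sqrt (q t)) / 2 * qd t))"
    have Md: "\<And>t. ((\<lambda>t. t * (2 * ((1-a)/4) * x t - (c - a/2))) has_real_derivative M' t) (at t)"
      unfolding Meq M'_def using DERIV_mult[OF DERIV_ident sd] by (simp add: mult.commute)
    have Mp: "\<And>t. M' t > 0"
    proof -
      fix t
      have s0: "sqrt (q t) > 0" using qpos by simp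
      have "M' t = (2 * q t + t * qd t) / (2 * sqrt (q t))"
        using s0 qpos[of t] by (simp add: M'_def field_simps real_sqrt_mult[symmetric] power2_eq_square)
      moreover have "2 * q t + t * qd t = 2 * c'^2 + 2 * K / (1 + t^2)^2"
      proof -
        define u where "u = 1 + t^2"
        have up: "u > 0" using tp[of t] by (simp add: u_def)
        have e1: "2 * q t + t * qd t = 2 * c'^2 + (2 * K / u - 2 * K * t^2 / u^2)"
          unfolding q_def qd_def u_def[symmetric] by (simp add: algebra_simps power2_eq_square)
        have e2: "2 * K / u = 2 * K * u / u^2" using up by (simp add: power2_eq_square)
        have e3: "2 * K * u / u^2 - 2 * K * t^2 / u^2 = 2 * K * (u - t^2) / u^2"
          by (simp add: diff_divide_distrib algebra_simps)
        have e4: "u - t^2 = 1" by (simp add: u_def)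
        show ?thesis unfolding e1 e2 e3 e4 by (simp add: u_def)
      qed
      moreover have "2 * c'^2 + 2 * K / (1 + t^2)^2 > 0" using Kp tp[of t]
        by (simp add: add_nonneg_pos divide_pos_pos)
      ultimately show "M' t > 0" using s0 by simp
    qed
    show ?thesis by (rule level_from_x[OF a xpos xeq xd Md Mp])
  qed
qed



lemma shear:
  fixes h g :: "complex \<Rightarrow> complex" and b :: real
  assumes b: "-1 \<le> b" "b \<le> 1"
    and hol: "h holomorphic_on unit_disc" "g holomorphic_on unit_disc"
    and dil: "\<And>z. z \<in> unit_disc \<Longrightarrow> cmod (deriv g z) < cmod (deriv h z)"
    and sum: "\<And>z. z \<in> unit_disc \<Longrightarrow> h z + g z = phi b z"
  shows "inj_on (\<lambda>z. h z + cnj (g z)) unit_disc \<and> convex_dir_imag ((\<lambda>z. h z + cnj (g z)) ` unit_disc)"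
proof -
  define f where "f = (\<lambda>z. h z + cnj (g z))"
  have Ref: "\<And>z. z \<in> unit_disc \<Longrightarrow> Re (f z) = Re (phi b z)"
    by (simp add: f_def sum[symmetric])
  have Imf: "\<And>z. Im (f z) = Im (h z) - Im (g z)" by (simp add: f_def)
  have mono: "strict_mono (\<lambda>t. Im (f (\<Gamma> t)))" if L: "level_ok b c \<Gamma> M M'" for c \<Gamma> M M'
  proof -
    define G where "G = (\<lambda>t. SOME G'. (\<Gamma> has_vector_derivative G') (at t))"
    have ex: "\<And>t. \<exists>G'. (\<Gamma> has_vector_derivative G') (at t)"
      using L unfolding level_ok_def by blast
    have Gd: "\<And>t. (\<Gamma> has_vector_derivative G t) (at t)"
      unfolding G_def by (rule someI_ex[OF ex])
    have Gin: "\<And>t. \<Gamma> t \<in> unit_disc" using L unfolding level_ok_def by blast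
    have Gp: "\<And>t. phi b (\<Gamma> t) = of_real c + \<i> * of_real (M t)"
      using L unfolding level_ok_def by blast
    have eq: "\<And>t. h (\<Gamma> t) + g (\<Gamma> t) = of_real c + \<i> * of_real (M t)"
      using Gin sum Gp by simp
    have Md: "\<And>t. (M has_real_derivative M' t) (at t)" and Mp: "\<And>t. M' t > 0"
      using L unfolding level_ok_def by blast+
    show ?thesis unfolding Imf
      by (rule shear_core[OF hol dil Gin Gd eq Md Mp])
  qed
  have cont: "continuous_on UNIV (\<lambda>t. f (\<Gamma> t))" if L: "level_ok b c \<Gamma> M M'" for c \<Gamma> M M'
  proof -
    have Gin: "\<And>t. \<Gamma> t \<in> unit_disc" using L unfolding level_ok_def by blast
    have ct: "isCont \<Gamma> t" for t
    proof -
      obtain G' where "(\<Gamma> has_vector_derivative G') (at t)" using L unfolding level_ok_def by blast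
      then show ?thesis by (rule has_vector_derivative_continuous)
    qed
    have hc: "isCont h z" "isCont g z" if "z \<in> unit_disc" for z
      using holomorphic_on_imp_continuous_on[OF hol(1)] holomorphic_on_imp_continuous_on[OF hol(2)]
        that open_unit_disc by (auto simp: continuous_on_eq_continuous_at)
    have c1: "isCont (\<lambda>t. h (\<Gamma> t)) t" for t
      using continuous_at_compose[OF ct hc(1)[OF Gin]] by (simp add: o_def)
    have c2: "isCont (\<lambda>t. g (\<Gamma> t)) t" for t
      using continuous_at_compose[OF ct hc(2)[OF Gin]] by (simp add: o_def)
    have "isCont (\<lambda>t. f (\<Gamma> t)) t" for t
      unfolding f_def using c1 c2 by (intro continuous_add continuous_cnj) auto
    then show ?thesis by (simp add: continuous_at_imp_continuous_on)
  qed
  have inj: "inj_on f unit_disc"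
  proof (rule inj_onI)
    fix z w assume z: "z \<in> unit_disc" and w: "w \<in> unit_disc" and e: "f z = f w"
    define c where "c = Re (phi b z)"
    obtain \<Gamma> M M' where L: "level_ok b c \<Gamma> M M'" using level_exists[OF b z] c_def by blast
    have "Re (phi b w) = c" using Ref[OF z] Ref[OF w] e c_def by simp
    then obtain t2 where t2: "w = \<Gamma> t2" using L w unfolding level_ok_def by blast
    obtain t1 where t1: "z = \<Gamma> t1" using L z c_def unfolding level_ok_def by blast
    have "Im (f (\<Gamma> t1)) = Im (f (\<Gamma> t2))" using e t1 t2 by simp
    then have "t1 = t2" using strict_mono_eq[OF mono[OF L]] by blast
    then show "z = w" using t1 t2 by simp
  qed
  have conv: "convex_dir_imag (f ` unit_disc)"
    unfolding convex_dir_imag_def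
  proof
    fix x :: real
    show "connected (f ` unit_disc \<inter> {z. Re z = x})"
    proof (cases "f ` unit_disc \<inter> {z. Re z = x} = {}")
      case True then show ?thesis by simp
    next
      case False
      then obtain z0 where z0: "z0 \<in> unit_disc" "Re (f z0) = x" by auto
      have "Re (phi b z0) = x" using z0 Ref by simp
      then obtain \<Gamma> M M' where L: "level_ok b x \<Gamma> M M'" using level_exists[OF b z0(1)] by blast
      have Gin: "\<And>t. \<Gamma> t \<in> unit_disc" and Gp: "\<And>t. phi b (\<Gamma> t) = of_real x + \<i> * of_real (M t)"
        and Gs: "\<And>z. z \<in> unit_disc \<Longrightarrow> Re (phi b z) = x \<Longrightarrow> z \<in> range \<Gamma>"
        using L unfolding level_ok_def by blast+
      have "f ` unit_disc \<inter> {z. Re z = x} = (\<lambda>t. f (\<Gamma> t)) ` UNIV"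
      proof
        show "f ` unit_disc \<inter> {z. Re z = x} \<subseteq> (\<lambda>t. f (\<Gamma> t)) ` UNIV"
        proof
          fix w assume "w \<in> f ` unit_disc \<inter> {z. Re z = x}"
          then obtain z where z: "z \<in> unit_disc" "w = f z" "Re (f z) = x" by auto
          then obtain t where "z = \<Gamma> t" using Gs Ref by (metis rangeE)
          then show "w \<in> (\<lambda>t. f (\<Gamma> t)) ` UNIV" using z by auto
        qed
        show "(\<lambda>t. f (\<Gamma> t)) ` UNIV \<subseteq> f ` unit_disc \<inter> {z. Re z = x}"
          using Gin Gp Ref by auto
      qed
      moreover have "connected ((\<lambda>t. f (\<Gamma> t)) ` UNIV)"
        by (rule connected_continuous_image[OF cont[OF L]]) simp
      ultimately show ?thesis by simp
    qed
  qed
  show ?thesis using inj conv by (simp add: f_def)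
qed



lemma cmod_comb_sq:
  fixes a b :: complex and t s :: real
  shows "(cmod (of_real t * a + of_real s * b))^2 = t^2 * (cmod a)^2 + s^2 * (cmod b)^2 + 2 * t * s * Re (a * cnj b)"
  by (simp only: cmod_power2) (simp add: power2_eq_square algebra_simps)

lemma comb_dil:
  fixes a1 a2 b1 b2 :: complex and t :: real
  assumes t: "0 \<le> t" "t \<le> 1"
    and d1: "cmod b1 < cmod a1" and d2: "cmod b2 < cmod a2"
    and r: "Re (a1 * cnj a2 - b1 * cnj b2) > 0"
  shows "cmod (of_real t * b1 + of_real (1 - t) * b2) < cmod (of_real t * a1 + of_real (1 - t) * a2)"
proof -
  define s where "s = 1 - t"
  have s: "0 \<le> s" "t + s = 1" using t by (auto simp: s_def)
  have X1: "(cmod a1)^2 - (cmod b1)^2 > 0" using d1 by (simp add: power_strict_mono)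
  have X2: "(cmod a2)^2 - (cmod b2)^2 > 0" using d2 by (simp add: power_strict_mono)
  have Y: "Re (a1 * cnj a2) - Re (b1 * cnj b2) > 0" using r by simp
  have "(cmod (of_real t * a1 + of_real s * a2))^2 - (cmod (of_real t * b1 + of_real s * b2))^2
      = t^2 * ((cmod a1)^2 - (cmod b1)^2) + s^2 * ((cmod a2)^2 - (cmod b2)^2)
        + 2 * t * s * (Re (a1 * cnj a2) - Re (b1 * cnj b2))"
    unfolding cmod_comb_sq by (simp add: algebra_simps)
  moreover have "t^2 * ((cmod a1)^2 - (cmod b1)^2) + s^2 * ((cmod a2)^2 - (cmod b2)^2)
        + 2 * t * s * (Re (a1 * cnj a2) - Re (b1 * cnj b2)) > 0"
  proof (cases "t = 0")
    case True
    then have "s = 1" using s by simp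
    then show ?thesis using True X2 by simp
  next
    case False
    then have tp: "t > 0" using t by simp
    have "t^2 * ((cmod a1)^2 - (cmod b1)^2) > 0" using tp X1 by simp
    moreover have "s^2 * ((cmod a2)^2 - (cmod b2)^2) \<ge> 0" using X2 by (intro mult_nonneg_nonneg) (auto simp del: diff_ge_0_iff_ge)
    moreover have "2 * t * s * (Re (a1 * cnj a2) - Re (b1 * cnj b2)) \<ge> 0"
      using tp s Y by simp
    ultimately show ?thesis by linarith
  qed
  ultimately have "(cmod (of_real t * b1 + of_real s * b2))^2 < (cmod (of_real t * a1 + of_real s * a2))^2"
    by linarith
  then show ?thesis unfolding s_def by (meson norm_ge_zero power_less_imp_less_base)
qed

lemma comb_deriv:
  assumes "f1 holomorphic_on unit_disc" "f2 holomorphic_on unit_disc" "z \<in> unit_disc"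
  shows "deriv (\<lambda>z. of_real t * f1 z + of_real s * f2 z) z = of_real t * deriv f1 z + of_real s * deriv f2 z"
proof -
  have d1: "(f1 has_field_derivative deriv f1 z) (at z)"
    using holomorphic_derivI[OF assms(1) open_unit_disc assms(3)] by blast
  have d2: "(f2 has_field_derivative deriv f2 z) (at z)"
    using holomorphic_derivI[OF assms(2) open_unit_disc assms(3)] by blast
  show ?thesis
    by (rule DERIV_imp_deriv) (intro DERIV_add DERIV_cmult d1 d2)
qed

lemma dil_of_SH:
  assumes "in_SH h g" "z \<in> unit_disc"
  shows "cmod (deriv g z) < cmod (deriv h z)" "deriv h z \<noteq> 0"
proof -
  have "deriv h z \<noteq> 0" "cmod (deriv g z / deriv h z) < 1"
    using assms unfolding in_SH_def dilatation_def by auto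
  then show "cmod (deriv g z) < cmod (deriv h z)" "deriv h z \<noteq> 0"
    by (auto simp: norm_divide divide_less_eq)
qed

theorem mainTheorem9:
  fixes \<alpha>1 \<alpha>2 :: real and h1 g1 h2 g2 :: "complex \<Rightarrow> complex"
  assumes "\<alpha>1 \<in> {-1..1}" and "\<alpha>2 \<in> {-1..1}"
    and "in_SH h1 g1" and "in_SH h2 g2"
    and "\<forall>z\<in>unit_disc. h1 z + g1 z = z * (1 - of_real \<alpha>1 * z) / (1 - z\<^sup>2)"
    and "\<forall>z\<in>unit_disc. h2 z + g2 z = z * (1 - of_real \<alpha>2 * z) / (1 - z\<^sup>2)"
    and "\<forall>z\<in>unit_disc. Re ((1 - dilatation h1 g1 z * cnj (dilatation h2 g2 z))
                             * deriv h1 z * cnj (deriv h2 z)) > 0"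
  shows "\<forall>t::real\<in>{0..1}.
           in_SH (\<lambda>z. of_real t * h1 z + of_real (1 - t) * h2 z)
                 (\<lambda>z. of_real t * g1 z + of_real (1 - t) * g2 z) \<and>
           convex_dir_imag ((\<lambda>z. (of_real t * h1 z + of_real (1 - t) * h2 z)
                 + cnj (of_real t * g1 z + of_real (1 - t) * g2 z)) ` unit_disc)"
proof
  fix t :: real assume t: "t \<in> {0..1}"
  note S1 = assms(3)[unfolded in_SH_def] and S2 = assms(4)[unfolded in_SH_def]
  have hol: "h1 holomorphic_on unit_disc" "g1 holomorphic_on unit_disc"
            "h2 holomorphic_on unit_disc" "g2 holomorphic_on unit_disc"
    using S1 S2 by blast+
  define H where "H = (\<lambda>z. of_real t * h1 z + of_real (1 - t) * h2 z)"
  define G where "G = (\<lambda>z. of_real t * g1 z + of_real (1 - t) * g2 z)"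
  define b where "b = t * \<alpha>1 + (1 - t) * \<alpha>2"
  have b: "-1 \<le> b" "b \<le> 1"
  proof -
    have "t * (-1) + (1-t) * (-1) \<le> b" unfolding b_def using t assms(1,2)
      by (intro add_mono mult_left_mono) auto
    then show "-1 \<le> b" by simp
    have "b \<le> t * 1 + (1-t) * 1" unfolding b_def using t assms(1,2)
      by (intro add_mono mult_left_mono) auto
    then show "b \<le> 1" by simp
  qed
  have holH: "H holomorphic_on unit_disc" and holG: "G holomorphic_on unit_disc"
    unfolding H_def G_def using hol by (auto intro!: holomorphic_intros)
  have dH: "\<And>z. z \<in> unit_disc \<Longrightarrow> deriv H z = of_real t * deriv h1 z + of_real (1 - t) * deriv h2 z"
    unfolding H_def using hol by (intro comb_deriv) auto
  have dG: "\<And>z. z \<in> unit_disc \<Longrightarrow> deriv G z = of_real t * deriv g1 z + of_real (1 - t) * deriv g2 z"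
    unfolding G_def using hol by (intro comb_deriv) auto
  have dil: "cmod (deriv G z) < cmod (deriv H z)" if z: "z \<in> unit_disc" for z
  proof -
    note a1 = dil_of_SH[OF assms(3) z] and a2 = dil_of_SH[OF assms(4) z]
    have "(1 - dilatation h1 g1 z * cnj (dilatation h2 g2 z)) * deriv h1 z * cnj (deriv h2 z)
          = deriv h1 z * cnj (deriv h2 z) - deriv g1 z * cnj (deriv g2 z)"
      using a1(2) a2(2) by (simp add: dilatation_def field_simps)
    then have r: "Re (deriv h1 z * cnj (deriv h2 z) - deriv g1 z * cnj (deriv g2 z)) > 0"
      using assms(7) z by metis
    show ?thesis unfolding dH[OF z] dG[OF z]
      using t by (intro comb_dil a1(1) a2(1) r) auto
  qed
  have sum: "H z + G z = phi b z" if z: "z \<in> unit_disc" for z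
  proof -
    have "H z + G z = of_real t * (h1 z + g1 z) + of_real (1 - t) * (h2 z + g2 z)"
      by (simp add: H_def G_def algebra_simps)
    also have "\<dots> = of_real t * (z * (1 - of_real \<alpha>1 * z) / (1 - z\<^sup>2))
                  + of_real (1 - t) * (z * (1 - of_real \<alpha>2 * z) / (1 - z\<^sup>2))"
      using assms(5,6) z by simp
    also have "\<dots> = (of_real t * (z * (1 - of_real \<alpha>1 * z)) + of_real (1 - t) * (z * (1 - of_real \<alpha>2 * z))) / (1 - z\<^sup>2)"
      by (simp add: add_divide_distrib)
    also have "of_real t * (z * (1 - of_real \<alpha>1 * z)) + of_real (1 - t) * (z * (1 - of_real \<alpha>2 * z))
             = z * (1 - of_real b * z)"
      by (simp add: b_def algebra_simps)
    finally show ?thesis by (simp add: phi_def)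
  qed
  have sh: "inj_on (\<lambda>z. H z + cnj (G z)) unit_disc \<and> convex_dir_imag ((\<lambda>z. H z + cnj (G z)) ` unit_disc)"
    by (rule shear[OF b holH holG dil sum])
  have z0: "(0::complex) \<in> unit_disc" by (simp add: unit_disc_def)
  have n1: "h1 0 + cnj (g1 0) = 0" and n2: "h2 0 + cnj (g2 0) = 0" using S1 S2 by blast+
  have "H 0 + cnj (G 0) = of_real t * (h1 0 + cnj (g1 0)) + of_real (1 - t) * (h2 0 + cnj (g2 0))"
    by (simp add: H_def G_def algebra_simps)
  then have N: "H 0 + cnj (G 0) = 0" using n1 n2 by simp
  have D: "deriv H 0 = 1" using dH[OF z0] S1 S2 by (simp add: algebra_simps)
  have "in_SH H G"
    unfolding in_SH_def
  proof (intro conjI ballI holH holG N D)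
    show "inj_on (\<lambda>z. H z + cnj (G z)) unit_disc" using sh by blast
  next
    fix z assume z: "z \<in> unit_disc"
    have "cmod (deriv G z) < cmod (deriv H z)" by (rule dil[OF z])
    then show "deriv H z \<noteq> 0" "cmod (dilatation H G z) < 1"
      by (auto simp: dilatation_def norm_divide divide_less_eq)
  qed
  then show "in_SH (\<lambda>z. of_real t * h1 z + of_real (1 - t) * h2 z)
                 (\<lambda>z. of_real t * g1 z + of_real (1 - t) * g2 z) \<and>
           convex_dir_imag ((\<lambda>z. (of_real t * h1 z + of_real (1 - t) * h2 z)
                 + cnj (of_real t * g1 z + of_real (1 - t) * g2 z)) ` unit_disc)"
    using sh unfolding H_def G_def by blast
qed


end
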